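(* Let $\phi:\mathbb{R}\to\mathbb{R}$ be differentiable, $f(z)=A\phi(Bz)$ with $A\in\mathbb{R}^{k_0\times k}$, $B\in\mathbb{R}^{k\times k_0}$, and let $x^{(1)},\dots,x^{(n)}\in\mathbb{R}^{k_0}$. Run gradient descent with learning rate $\gamma>0$ on $\mathcal{L}=\frac12\sum_{i=1}^n\|x^{(i)}-f(x^{(i)})\|_2^2$. If $A^{(0)}=\sum_{i=1}^n x^{(i)}{a_i^{(0)}}^T$ and $B^{(0)}=\sum_{i=1}^n b_i^{(0)}{x^{(i)}}^T$ for vectors $a_i^{(0)},b_i^{(0)}\in\mathbb{R}^k$, then for all time steps $t$ there exist vectors $a_i^{(t)},b_i^{(t)}\in\mathbb{R}^k$ with $A^{(t)}=\sum_{i=1}^n x^{(i)}{a_i^{(t)}}^T$ and $B^{(t)}=\sum_{i=1}^n b_i^{(t)}{x^{(i)}}^T$.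
   Context: $\phi$ is applied coordinatewise. Gradient descent updates $A\leftarrow A-\gamma\nabla_A\mathcal{L}$, $B\leftarrow B-\gamma\nabla_B\mathcal{L}$ simultaneously. *)

theory Defs
  imports "HOL-Analysis.Analysis"
begin

definition outer :: "real ^ 'm \<Rightarrow> real ^ 'n \<Rightarrow> real ^ 'n ^ 'm" where
  "outer u v = (\<chi> r c. u $ r * v $ c)"

definition net :: "(real \<Rightarrow> real) \<Rightarrow> real ^ 'k ^ 'k0 \<Rightarrow> real ^ 'k0 ^ 'k \<Rightarrow> real ^ 'k0 \<Rightarrow> real ^ 'k0" where
  "net \<phi> A B z = A *v (\<chi> j. \<phi> ((B *v z) $ j))"

definition loss :: "(real \<Rightarrow> real) \<Rightarrow> (nat \<Rightarrow> real ^ 'k0) \<Rightarrow> nat \<Rightarrow> real ^ 'k ^ 'k0 \<Rightarrow> real ^ 'k0 ^ 'k \<Rightarrow> real" where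
  "loss \<phi> x n A B = 1/2 * (\<Sum>i = 1..n. (norm (x i - net \<phi> A B (x i)))\<^sup>2)"

end

theory Submission
  imports Defs
begin

lemma outer_inner: "outer u v \<bullet> H = u \<bullet> (H *v v)"
  unfolding outer_def inner_vec_def matrix_vector_mult_def by (simp add: sum_distrib_left algebra_simps)

lemma outer_inner2: "H \<bullet> outer u v = (H *v v) \<bullet> u"
  by (metis inner_commute outer_inner)

lemma lin_mv: "bounded_linear (\<lambda>X::real^'n^'m. X *v p)"
  apply (rule linear_conv_bounded_linear[THEN iffD1])
  apply (rule linearI)
  by (simp_all add: matrix_vector_mult_def vec_eq_iff sum.distrib algebra_simps sum_distrib_left)

lemma der_mv: "((\<lambda>X::real^'n^'m. X *v p) has_derivative (\<lambda>H. H *v p)) F"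
  using bounded_linear_imp_has_derivative[OF lin_mv] .

lemma chi_sum: "(\<chi> j. g j) = (\<Sum>j\<in>UNIV. g j *\<^sub>R axis j (1::real))"
  by (simp add: vec_eq_iff axis_def sum.delta if_distrib cong: if_cong)

lemma derA:
  fixes \<phi> :: "real \<Rightarrow> real" and x :: "nat \<Rightarrow> real ^ 'k0" and Y :: "real ^ 'k0 ^ 'k" and X0 :: "real ^ 'k ^ 'k0"
  defines "p \<equiv> \<lambda>i. (\<chi> j. \<phi> ((Y *v x i) $ j))"
  shows "((\<lambda>X. loss \<phi> x n X Y) has_derivative
     (\<lambda>H. (- (\<Sum>i=1..n. outer (x i - net \<phi> X0 Y (x i)) (p i))) \<bullet> H)) (at X0)"
proof -
  have d1: "((\<lambda>X. x i - X *v p i) has_derivative (\<lambda>H. - (H *v p i))) (at X0)" for i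
    using has_derivative_diff[OF has_derivative_const der_mv] by simp
  have d2: "((\<lambda>X. (x i - X *v p i) \<bullet> (x i - X *v p i)) has_derivative
     (\<lambda>H. (x i - X0 *v p i) \<bullet> (- (H *v p i)) + (- (H *v p i)) \<bullet> (x i - X0 *v p i))) (at X0)" for i
    using has_derivative_inner[OF d1 d1] .
  have d3: "((\<lambda>X. 1/2 * (\<Sum>i=1..n. (x i - X *v p i) \<bullet> (x i - X *v p i))) has_derivative
     (\<lambda>H. 1/2 * (\<Sum>i=1..n. (x i - X0 *v p i) \<bullet> (- (H *v p i)) + (- (H *v p i)) \<bullet> (x i - X0 *v p i)))) (at X0)"
    by (intro has_derivative_mult_right has_derivative_sum d2)
  have e: "(\<lambda>X. loss \<phi> x n X Y) = (\<lambda>X. 1/2 * (\<Sum>i=1..n. (x i - X *v p i) \<bullet> (x i - X *v p i)))"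
    by (simp add: loss_def net_def p_def power2_norm_eq_inner)
  show ?thesis
    unfolding e
    apply (rule has_derivative_eq_rhs[OF d3])
  proof (rule ext)
    fix H
    have t: "(x i - X0 *v p i) \<bullet> (- (H *v p i)) + (- (H *v p i)) \<bullet> (x i - X0 *v p i)
       = 2 * (- (outer (x i - net \<phi> X0 Y (x i)) (p i) \<bullet> H))" for i
    proof -
      have "outer (x i - X0 *v p i) (p i) \<bullet> H = (x i - X0 *v p i) \<bullet> (H *v p i)" by (rule outer_inner)
      moreover have "net \<phi> X0 Y (x i) = X0 *v p i" by (simp add: net_def p_def)
      ultimately show ?thesis by (simp add: inner_commute[of "H *v p i"])
    qed
    show "1/2 * (\<Sum>i=1..n. (x i - X0 *v p i) \<bullet> (- (H *v p i)) + (- (H *v p i)) \<bullet> (x i - X0 *v p i))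
      = (- (\<Sum>i=1..n. outer (x i - net \<phi> X0 Y (x i)) (p i))) \<bullet> H"
      unfolding t by (simp add: sum_distrib_left[symmetric] inner_sum_left sum_negf)
  qed
qed

lemma derB:
  fixes \<phi> :: "real \<Rightarrow> real" and x :: "nat \<Rightarrow> real ^ 'k0" and A0 :: "real ^ 'k ^ 'k0" and Y0 :: "real ^ 'k0 ^ 'k"
  assumes dphi: "\<And>z. \<phi> differentiable (at z)"
  defines "q \<equiv> \<lambda>i. (\<chi> j. ((x i - net \<phi> A0 Y0 (x i)) v* A0) $ j * deriv \<phi> ((Y0 *v x i) $ j))"
  shows "((\<lambda>Y. loss \<phi> x n A0 Y) has_derivative
     (\<lambda>H. (- (\<Sum>i=1..n. outer (q i) (x i))) \<bullet> H)) (at Y0)"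
proof -
  let ?d = "\<lambda>i j. deriv \<phi> ((Y0 *v x i) $ j)"
  have dp: "(\<phi> has_derivative (\<lambda>h. deriv \<phi> z * h)) (at z)" for z
    using DERIV_deriv_iff_real_differentiable[THEN iffD2, OF dphi[of z]]
    by (simp add: has_field_derivative_def)
  have bl: "bounded_linear (\<lambda>Y::real^'k0^'k. (Y *v x i) $ j)" for i j
    using bounded_linear_compose[OF bounded_linear_vec_nth lin_mv] .
  have dj: "((\<lambda>Y. \<phi> ((Y *v x i) $ j)) has_derivative (\<lambda>H. ?d i j * (H *v x i) $ j)) (at Y0)" for i j
    using has_derivative_compose[OF bounded_linear_imp_has_derivative[OF bl] dp] by (simp add: o_def)
  have ds: "((\<lambda>Y. (\<Sum>j\<in>UNIV. \<phi> ((Y *v x i) $ j) *\<^sub>R axis j (1::real))) has_derivative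
      (\<lambda>H. (\<Sum>j\<in>UNIV. (?d i j * (H *v x i) $ j) *\<^sub>R axis j (1::real)))) (at Y0)" for i
    by (intro has_derivative_sum has_derivative_scaleR_left dj)
  have d1: "((\<lambda>Y. x i - A0 *v (\<Sum>j\<in>UNIV. \<phi> ((Y *v x i) $ j) *\<^sub>R axis j (1::real))) has_derivative
      (\<lambda>H. - (A0 *v (\<Sum>j\<in>UNIV. (?d i j * (H *v x i) $ j) *\<^sub>R axis j (1::real))))) (at Y0)" for i
    using has_derivative_diff[OF has_derivative_const bounded_linear.has_derivative[OF matrix_vector_mul_bounded_linear ds]]
    by simp
  let ?g = "\<lambda>i Y. x i - A0 *v (\<Sum>j\<in>UNIV. \<phi> ((Y *v x i) $ j) *\<^sub>R axis j (1::real))"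
  let ?g' = "\<lambda>i H. - (A0 *v (\<Sum>j\<in>UNIV. (?d i j * (H *v x i) $ j) *\<^sub>R axis j (1::real)))"
  have d3: "((\<lambda>Y. 1/2 * (\<Sum>i=1..n. ?g i Y \<bullet> ?g i Y)) has_derivative
     (\<lambda>H. 1/2 * (\<Sum>i=1..n. ?g i Y0 \<bullet> ?g' i H + ?g' i H \<bullet> ?g i Y0))) (at Y0)"
    by (intro has_derivative_mult_right has_derivative_sum has_derivative_inner d1)
  have e: "(\<lambda>Y. loss \<phi> x n A0 Y) = (\<lambda>Y. 1/2 * (\<Sum>i=1..n. ?g i Y \<bullet> ?g i Y))"
    by (simp add: loss_def net_def power2_norm_eq_inner chi_sum[symmetric])
  show ?thesis
    unfolding e
    apply (rule has_derivative_eq_rhs[OF d3])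
  proof (rule ext)
    fix H
    have t: "?g i Y0 \<bullet> ?g' i H + ?g' i H \<bullet> ?g i Y0 = 2 * (- (outer (q i) (x i) \<bullet> H))" for i
    proof -
      have g0: "?g i Y0 = x i - net \<phi> A0 Y0 (x i)" by (simp add: net_def chi_sum[symmetric])
      have w: "(\<Sum>j\<in>UNIV. (?d i j * (H *v x i) $ j) *\<^sub>R axis j (1::real)) = (\<chi> j. ?d i j * (H *v x i) $ j)"
        by (rule chi_sum[symmetric])
      have "?g i Y0 \<bullet> ?g' i H = - (((x i - net \<phi> A0 Y0 (x i)) v* A0) \<bullet> (\<chi> j. ?d i j * (H *v x i) $ j))"
        unfolding g0 w by (simp add: dot_lmul_matrix)
      also have "... = - (q i \<bullet> (H *v x i))"
        unfolding q_def inner_vec_def by (simp add: algebra_simps)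
      also have "... = - (outer (q i) (x i) \<bullet> H)" by (simp add: outer_inner)
      finally have c: "?g i Y0 \<bullet> ?g' i H = - (outer (q i) (x i) \<bullet> H)" .
      have "?g' i H \<bullet> ?g i Y0 = ?g i Y0 \<bullet> ?g' i H" by (rule inner_commute)
      then show ?thesis using c by simp
    qed
    show "1/2 * (\<Sum>i=1..n. ?g i Y0 \<bullet> ?g' i H + ?g' i H \<bullet> ?g i Y0)
      = (- (\<Sum>i=1..n. outer (q i) (x i))) \<bullet> H"
      unfolding t by (simp add: sum_distrib_left[symmetric] inner_sum_left sum_negf)
  qed
qed

lemma lin_outer_r: "linear (outer u)"
  by (rule linearI) (simp_all add: outer_def vec_eq_iff algebra_simps)

lemma lin_outer_l: "linear (\<lambda>u. outer u v)"
  by (rule linearI) (simp_all add: outer_def vec_eq_iff algebra_simps)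

lemma outer_scale_move: "outer (c *\<^sub>R u) v = outer u (c *\<^sub>R v)"
  by (simp add: outer_def vec_eq_iff)

lemma mv_outer: "outer u v *v p = (v \<bullet> p) *\<^sub>R u"
  by (simp add: outer_def vec_eq_iff matrix_vector_mult_def inner_vec_def sum_distrib_left algebra_simps)

lemma grad_eq:
  fixes G C :: "'a::real_inner"
  assumes "(f has_derivative (\<lambda>H. G \<bullet> H)) (at X)" "(f has_derivative (\<lambda>H. C \<bullet> H)) (at X)"
  shows "G = C"
proof -
  have "(\<lambda>H. G \<bullet> H) = (\<lambda>H. C \<bullet> H)" using has_derivative_unique[OF assms] .
  then have "G \<bullet> (G - C) = C \<bullet> (G - C)" by metis
  then have "(G - C) \<bullet> (G - C) = 0" by (simp add: inner_diff_left)
  then show ?thesis by simp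
qed

theorem mainTheorem11:
  fixes \<phi> :: "real \<Rightarrow> real" and x :: "nat \<Rightarrow> real ^ 'k0" and n :: nat and \<gamma> :: real
    and A :: "nat \<Rightarrow> real ^ 'k ^ 'k0" and B :: "nat \<Rightarrow> real ^ 'k0 ^ 'k"
    and GA :: "nat \<Rightarrow> real ^ 'k ^ 'k0" and GB :: "nat \<Rightarrow> real ^ 'k0 ^ 'k"
    and a0 b0 :: "nat \<Rightarrow> real ^ 'k"
  assumes "\<And>z. \<phi> differentiable (at z)"
    and "\<gamma> > 0"
    and "\<And>t. ((\<lambda>X. loss \<phi> x n X (B t)) has_derivative (\<lambda>H. GA t \<bullet> H)) (at (A t))"
    and "\<And>t. ((\<lambda>Y. loss \<phi> x n (A t) Y) has_derivative (\<lambda>H. GB t \<bullet> H)) (at (B t))"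
    and "\<And>t. A (Suc t) = A t - \<gamma> *\<^sub>R GA t"
    and "\<And>t. B (Suc t) = B t - \<gamma> *\<^sub>R GB t"
    and "A 0 = (\<Sum>i = 1..n. outer (x i) (a0 i))"
    and "B 0 = (\<Sum>i = 1..n. outer (b0 i) (x i))"
  shows "\<forall>t. \<exists>a b :: nat \<Rightarrow> real ^ 'k.
           A t = (\<Sum>i = 1..n. outer (x i) (a i)) \<and> B t = (\<Sum>i = 1..n. outer (b i) (x i))"
proof
  fix t
  show "\<exists>a b :: nat \<Rightarrow> real ^ 'k.
           A t = (\<Sum>i = 1..n. outer (x i) (a i)) \<and> B t = (\<Sum>i = 1..n. outer (b i) (x i))"
  proof (induction t)
    case 0
    then show ?case using assms(7,8) by blast
  next
    case (Suc t)
    then obtain a b :: "nat \<Rightarrow> real ^ 'k" where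
      ha: "A t = (\<Sum>i = 1..n. outer (x i) (a i))" and hb: "B t = (\<Sum>i = 1..n. outer (b i) (x i))"
      by blast
    define p where "p = (\<lambda>i. (\<chi> j. \<phi> ((B t *v x i) $ j)) :: real ^ 'k)"
    define q where "q = (\<lambda>i. (\<chi> j. ((x i - net \<phi> (A t) (B t) (x i)) v* (A t)) $ j * deriv \<phi> ((B t *v x i) $ j)) :: real ^ 'k)"
    have GA: "GA t = - (\<Sum>i=1..n. outer (x i - net \<phi> (A t) (B t) (x i)) (p i))"
      using grad_eq[OF assms(3)[of t] derA] by (simp add: p_def)
    have GB: "GB t = - (\<Sum>i=1..n. outer (q i) (x i))"
      using grad_eq[OF assms(4)[of t] derB[OF assms(1)]] by (simp add: q_def)
    define c where "c = (\<lambda>j i. a j \<bullet> p i)"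
    have netx: "net \<phi> (A t) (B t) (x i) = (\<Sum>j=1..n. c j i *\<^sub>R x j)" for i
    proof -
      have lm: "linear (\<lambda>X::real^'k^'k0. X *v p i)"
        using linear_conv_bounded_linear lin_mv by blast
      have "net \<phi> (A t) (B t) (x i) = A t *v p i" by (simp add: net_def p_def)
      also have "... = (\<Sum>j=1..n. outer (x j) (a j) *v p i)" unfolding ha by (rule linear_sum[OF lm])
      finally show ?thesis by (simp add: mv_outer c_def)
    qed
    have "(\<Sum>i=1..n. outer (x i - net \<phi> (A t) (B t) (x i)) (p i))
        = (\<Sum>i=1..n. outer (x i) (p i)) - (\<Sum>i=1..n. \<Sum>j=1..n. outer (x j) (c j i *\<^sub>R p i))"
      unfolding netx
      by (simp add: linear_diff[OF lin_outer_l] linear_sum[OF lin_outer_l] outer_scale_move sum_subtractf)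
    also have "... = (\<Sum>j=1..n. outer (x j) (p j - (\<Sum>i=1..n. c j i *\<^sub>R p i)))"
      by (simp add: linear_diff[OF lin_outer_r] linear_sum[OF lin_outer_r] sum_subtractf) (rule sum.swap)
    finally have GA2: "GA t = - (\<Sum>j=1..n. outer (x j) (p j - (\<Sum>i=1..n. c j i *\<^sub>R p i)))"
      using GA by simp
    have "A (Suc t) = (\<Sum>j=1..n. outer (x j) (a j + \<gamma> *\<^sub>R (p j - (\<Sum>i=1..n. c j i *\<^sub>R p i))))"
      unfolding assms(5) GA2 ha
      by (simp add: linear_add[OF lin_outer_r] linear_scale[OF lin_outer_r] sum.distrib scaleR_sum_right)
    moreover have "B (Suc t) = (\<Sum>j=1..n. outer (b j + \<gamma> *\<^sub>R q j) (x j))"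
      unfolding assms(6) GB hb
      by (simp add: linear_add[OF lin_outer_l] linear_scale[OF lin_outer_l] sum.distrib scaleR_sum_right)
    ultimately show ?case
      by (intro exI[of _ "\<lambda>j. a j + \<gamma> *\<^sub>R (p j - (\<Sum>i=1..n. c j i *\<^sub>R p i))"]
                exI[of _ "\<lambda>j. b j + \<gamma> *\<^sub>R q j"] conjI)
  qed
qed

end
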